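(* Let $X$ be a geodesic metric space, $e\in X$, and $N\le N'$ Morse gauges. For $x,y\in\partial_s X^{(N)}_e$ (regarded also as points of $\partial_s X^{(N')}_e$ via the inclusion $X^{(N)}_e\subseteq X^{(N')}_e$), \[(x\cdot_N y)_e\le (x\cdot_{N'} y)_e\le (x\cdot_N y)_e+32N'(3,0).\]
   Context: A Morse gauge is a function $N$ assigning to each $(K,C)$ a number $N(K,C)\ge0$; $N\le N'$ means pointwise. A geodesic is $N$-Morse if every $(K,C)$-quasi-geodesic with endpoints on it lies in its $N(K,C)$-neighbourhood. $X^{(N)}_e$ is the set of points joined to $e$ by an $N$-Morse geodesic (restricted metric); it is hyperbolic. Its sequential boundary $\partial_s X^{(N)}_e$ consists of equivalence classes of sequences $(x_n)$ in $X^{(N)}_e$ with $(x_i\cdot x_j)_e\to\infty$, where $(a\cdot b)_e=\frac12(d(e,a)+d(e,b)-d(a,b))$ and $(x_n)\sim(y_m)$ iff $(x_i\cdot y_j)_e\to\infty$. The $N$-Gromov product $(x\cdot_N y)_e$ of $x,y\in\partial_s X^{(N)}_e$ is the supremum of $\liminf_{m,n\to\infty}(x_n\cdot y_m)_e$ over all pairs of sequences $(x_n),(y_m)\subseteq X^{(N)}_e$ representing $x$ and $y$. *)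

theory Defs
  imports "HOL-Analysis.Analysis"
begin

definition gromov_prod :: "'a::metric_space \<Rightarrow> 'a \<Rightarrow> 'a \<Rightarrow> real" where
  "gromov_prod e a b = (dist e a + dist e b - dist a b) / 2"

definition geodesic_path :: "(real \<Rightarrow> 'a::metric_space) \<Rightarrow> 'a \<Rightarrow> 'a \<Rightarrow> bool" where
  "geodesic_path \<gamma> x y \<longleftrightarrow> \<gamma> 0 = x \<and> \<gamma> (dist x y) = y \<and>
     (\<forall>s\<in>{0..dist x y}. \<forall>t\<in>{0..dist x y}. dist (\<gamma> s) (\<gamma> t) = \<bar>s - t\<bar>)"

definition geodesic_space :: "'a::metric_space itself \<Rightarrow> bool" where
  "geodesic_space _ \<longleftrightarrow> (\<forall>x y::'a. \<exists>\<gamma>. geodesic_path \<gamma> x y)"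

definition quasi_geodesic :: "real \<Rightarrow> real \<Rightarrow> (real \<Rightarrow> 'a::metric_space) \<Rightarrow> real \<Rightarrow> real \<Rightarrow> bool" where
  "quasi_geodesic K C q a b \<longleftrightarrow> a \<le> b \<and>
     (\<forall>s\<in>{a..b}. \<forall>t\<in>{a..b}. \<bar>s - t\<bar> / K - C \<le> dist (q s) (q t) \<and> dist (q s) (q t) \<le> K * \<bar>s - t\<bar> + C)"

definition morse_gauge :: "(real \<Rightarrow> real \<Rightarrow> real) \<Rightarrow> bool" where
  "morse_gauge N \<longleftrightarrow> (\<forall>K C. K \<ge> 1 \<longrightarrow> C \<ge> 0 \<longrightarrow> N K C \<ge> 0)"

definition gauge_le :: "(real \<Rightarrow> real \<Rightarrow> real) \<Rightarrow> (real \<Rightarrow> real \<Rightarrow> real) \<Rightarrow> bool" where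
  "gauge_le N N' \<longleftrightarrow> (\<forall>K C. K \<ge> 1 \<longrightarrow> C \<ge> 0 \<longrightarrow> N K C \<le> N' K C)"

definition morse_set :: "(real \<Rightarrow> real \<Rightarrow> real) \<Rightarrow> 'a::metric_space set \<Rightarrow> bool" where
  "morse_set N G \<longleftrightarrow> (\<forall>K C q a b. K \<ge> 1 \<longrightarrow> C \<ge> 0 \<longrightarrow> quasi_geodesic K C q a b \<longrightarrow>
      q a \<in> G \<longrightarrow> q b \<in> G \<longrightarrow> (\<forall>t\<in>{a..b}. \<exists>g\<in>G. dist (q t) g \<le> N K C))"

definition morse_stratum :: "(real \<Rightarrow> real \<Rightarrow> real) \<Rightarrow> 'a::metric_space \<Rightarrow> 'a set" where
  "morse_stratum N e = {x. \<exists>\<gamma>. geodesic_path \<gamma> e x \<and> morse_set N (\<gamma> ` {0..dist e x})}"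

definition gromov_seq :: "(real \<Rightarrow> real \<Rightarrow> real) \<Rightarrow> 'a::metric_space \<Rightarrow> (nat \<Rightarrow> 'a) \<Rightarrow> bool" where
  "gromov_seq N e x \<longleftrightarrow> range x \<subseteq> morse_stratum N e \<and>
     filterlim (\<lambda>(i,j). gromov_prod e (x i) (x j)) at_top (sequentially \<times>\<^sub>F sequentially)"

definition seq_equiv :: "'a::metric_space \<Rightarrow> (nat \<Rightarrow> 'a) \<Rightarrow> (nat \<Rightarrow> 'a) \<Rightarrow> bool" where
  "seq_equiv e x y \<longleftrightarrow>
     filterlim (\<lambda>(i,j). gromov_prod e (x i) (y j)) at_top (sequentially \<times>\<^sub>F sequentially)"

definition bdry_class :: "(real \<Rightarrow> real \<Rightarrow> real) \<Rightarrow> 'a::metric_space \<Rightarrow> (nat \<Rightarrow> 'a) \<Rightarrow> (nat \<Rightarrow> 'a) set" where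
  "bdry_class N e x = {y. gromov_seq N e y \<and> seq_equiv e x y}"

definition seq_boundary :: "(real \<Rightarrow> real \<Rightarrow> real) \<Rightarrow> 'a::metric_space \<Rightarrow> (nat \<Rightarrow> 'a) set set" where
  "seq_boundary N e = {bdry_class N e x | x. gromov_seq N e x}"

(* N-Gromov product of two boundary points (as sets of representing sequences) *)
definition N_gromov_prod :: "'a::metric_space \<Rightarrow> (nat \<Rightarrow> 'a) set \<Rightarrow> (nat \<Rightarrow> 'a) set \<Rightarrow> ereal" where
  "N_gromov_prod e X Y = (SUP (x,y)\<in>X \<times> Y.
      Liminf (sequentially \<times>\<^sub>F sequentially) (\<lambda>(n,m). ereal (gromov_prod e (x n) (y m))))"

end

theory Submission
  imports Defs
begin

lemma geo_dist: "geodesic_path g x y \<Longrightarrow> s \<in> {0..dist x y} \<Longrightarrow> t \<in> {0..dist x y} \<Longrightarrow> dist (g s) (g t) = \<bar>s - t\<bar>"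
  unfolding geodesic_path_def by blast

lemma geo_cont: assumes "geodesic_path g x y" shows "continuous_on {0..dist x y} g"
  unfolding continuous_on_iff
proof (intro ballI allI impI)
  fix s e :: real assume s: "s \<in> {0..dist x y}" and e: "0 < e"
  show "\<exists>d>0. \<forall>t\<in>{0..dist x y}. dist t s < d \<longrightarrow> dist (g t) (g s) < e"
    using e geo_dist[OF assms _ s] by (intro exI[of _ e]) (auto simp: dist_real_def)
qed

lemma geo_rev: assumes "geodesic_path g x y" shows "geodesic_path (\<lambda>s. g (dist x y - s)) y x"
  using assms unfolding geodesic_path_def by (auto simp: dist_commute abs_minus_commute)

lemma gp_nonneg: "0 \<le> gromov_prod e a b"
  unfolding gromov_prod_def using dist_triangle[of a b e] by (simp add: dist_commute)

lemma gp_le: "gromov_prod e a b \<le> dist e a"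
  unfolding gromov_prod_def using dist_triangle[of e b a] by (simp add: dist_commute)

lemma qg_lemma:
  assumes g: "geodesic_path \<tau> a b" and u: "u \<in> {0..dist a b}"
    and near: "\<forall>s\<in>{0..u}. dist e (\<tau> u) \<le> dist e (\<tau> s)"
    and h: "geodesic_path \<eta> (\<tau> u) e"
  shows "quasi_geodesic 3 0 (\<lambda>s. if s \<le> u then \<tau> s else \<eta> (s - u)) 0 (u + dist (\<tau> u) e)"
proof -
  let ?r = "dist (\<tau> u) e"
  let ?q = "\<lambda>s. if s \<le> u then \<tau> s else \<eta> (s - u)"
  have u0: "0 \<le> u" "u \<le> dist a b" using u by auto
  have t0: "\<tau> 0 = a" and etar: "\<eta> ?r = e" and eta0: "\<eta> 0 = \<tau> u" using g h unfolding geodesic_path_def by auto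
  have cross: "\<bar>s - t\<bar>/3 \<le> dist (\<tau> s) (\<eta> (t - u)) \<and> dist (\<tau> s) (\<eta> (t - u)) \<le> 3 * \<bar>s - t\<bar>"
    if s: "0 \<le> s" "s \<le> u" and t: "u \<le> t" "t \<le> u + ?r" for s t
  proof -
    define x where "x = t - u"
    define y where "y = u - s"
    have x: "0 \<le> x" "x \<le> ?r" using t x_def by auto
    have dzv: "dist (\<tau> u) (\<eta> x) = x" using geo_dist[OF h, of 0 x] x eta0 by auto
    have dve: "dist (\<eta> x) e = ?r - x" using geo_dist[OF h, of x ?r] x etar by auto
    have dzs: "dist (\<tau> s) (\<tau> u) = y" using geo_dist[OF g, of s u] s u0 y_def by auto
    have n: "dist e (\<tau> u) \<le> dist e (\<tau> s)" using near s by auto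
    have "dist e (\<tau> s) \<le> dist e (\<eta> x) + dist (\<eta> x) (\<tau> s)" by (rule dist_triangle)
    hence A: "x \<le> dist (\<tau> s) (\<eta> x)" using n dve by (simp add: dist_commute)
    have B: "y - x \<le> dist (\<tau> s) (\<eta> x)" using dist_triangle[of "\<tau> s" "\<tau> u" "\<eta> x"] dzs dzv by (simp add: dist_commute)
    have C: "dist (\<tau> s) (\<eta> x) \<le> y + x" using dist_triangle[of "\<tau> s" "\<eta> x" "\<tau> u"] dzs dzv by (simp add: dist_commute)
    have st: "\<bar>s - t\<bar> = x + y" using x_def y_def s t by auto
    show ?thesis unfolding st x_def[symmetric] using A B C x s y_def u0 by auto
  qed
  have main: "\<bar>s - t\<bar> / 3 - 0 \<le> dist (?q s) (?q t) \<and> dist (?q s) (?q t) \<le> 3 * \<bar>s - t\<bar> + 0"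
    if s: "s \<in> {0..u + ?r}" and t: "t \<in> {0..u + ?r}" for s t
  proof (cases "s \<le> u"; cases "t \<le> u")
    assume "s \<le> u" "t \<le> u" thus ?thesis using geo_dist[OF g, of s t] s t u0 by auto
  next
    assume "s \<le> u" "\<not> t \<le> u" thus ?thesis using cross[of s t] s t by auto
  next
    assume "\<not> s \<le> u" "t \<le> u" thus ?thesis using cross[of t s] s t by (auto simp: dist_commute abs_minus_commute)
  next
    assume "\<not> s \<le> u" "\<not> t \<le> u" thus ?thesis using geo_dist[OF h, of "s-u" "t-u"] s t by auto
  qed
  show ?thesis unfolding quasi_geodesic_def using main u0 by auto
qed

lemma gp_comm: "gromov_prod e a b = gromov_prod e b a"
  unfolding gromov_prod_def by (simp add: dist_commute)

lemma close_pt: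
  assumes g: "geodesic_path g e a" and t: "t \<in> {0..dist e a}" and t': "t' \<in> {0..dist e a}"
    and w: "dist w (g t') \<le> M" and we: "dist e w = t"
  shows "dist w (g t) \<le> 2 * M"
proof -
  have g0: "g 0 = e" using g unfolding geodesic_path_def by auto
  have "dist e (g t') = t'" using geo_dist[OF g, of 0 t'] t' g0 by auto
  hence "\<bar>t' - t\<bar> \<le> M" using dist_triangle[of e w "g t'"] dist_triangle[of e "g t'" w] w we
    by (auto simp: dist_commute abs_le_iff)
  moreover have "dist (g t') (g t) = \<bar>t' - t\<bar>" using geo_dist[OF g t' t] .
  ultimately show ?thesis using dist_triangle[of w "g t" "g t'"] w by (simp add: dist_commute)
qed

lemma morse_near:
  assumes g: "geodesic_path \<tau> a b" and u: "u \<in> {0..dist a b}"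
    and near: "\<forall>s\<in>{0..u}. dist e (\<tau> u) \<le> dist e (\<tau> s)"
    and h: "geodesic_path \<eta> (\<tau> u) e"
    and ms: "morse_set N G" and aG: "a \<in> G" and eG: "e \<in> G"
    and x: "x \<in> {0..dist (\<tau> u) e}"
  shows "\<exists>p\<in>G. dist (\<eta> x) p \<le> N 3 0"
proof -
  let ?r = "dist (\<tau> u) e"
  let ?q = "\<lambda>s. if s \<le> u then \<tau> s else \<eta> (s - u)"
  have qg: "quasi_geodesic 3 0 ?q 0 (u + ?r)" by (rule qg_lemma[OF g u near h])
  have t0: "\<tau> 0 = a" and etar: "\<eta> ?r = e" and eta0: "\<eta> 0 = \<tau> u" using g h unfolding geodesic_path_def by auto
  have u0: "0 \<le> u" using u by auto
  have q0: "?q 0 = a" using u0 t0 by simp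
  have qe: "?q (u + ?r) = e"
  proof (cases "?r = 0")
    case True thus ?thesis by simp
  next
    case False hence "?r > 0" by simp thus ?thesis using etar by simp
  qed
  have "\<forall>t\<in>{0..u + ?r}. \<exists>p\<in>G. dist (?q t) p \<le> N 3 0"
    using ms[unfolded morse_set_def, rule_format, of 3 0 ?q 0 "u + ?r"] qg q0 qe aG eG by simp
  hence "\<exists>p\<in>G. dist (?q (u + x)) p \<le> N 3 0" using x u0 by (intro bspec[where x="u+x"]) auto
  moreover have "?q (u + x) = \<eta> x" using x eta0 by (cases "x = 0") auto
  ultimately show ?thesis by simp
qed


lemma fellow:
  assumes sp: "geodesic_space TYPE('a::metric_space)"
    and ga: "geodesic_path ga e (a::'a)" and ma: "morse_set N (ga ` {0..dist e a})"
    and gb: "geodesic_path gb e b" and mb: "morse_set N (gb ` {0..dist e b})"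
    and t: "0 \<le> t" "t \<le> gromov_prod e a b"
  shows "dist (ga t) (gb t) \<le> 4 * N 3 0"
proof -
  obtain \<tau> where g: "geodesic_path \<tau> a b" using sp unfolding geodesic_space_def by blast
  define L where "L = dist a b"
  have "\<exists>u\<in>{0..L}. \<forall>s\<in>{0..L}. dist e (\<tau> u) \<le> dist e (\<tau> s)"
    apply (rule continuous_attains_inf)
    using geo_cont[OF g] L_def by (auto intro!: continuous_intros)
  then obtain u where u: "u \<in> {0..L}" and near: "\<forall>s\<in>{0..L}. dist e (\<tau> u) \<le> dist e (\<tau> s)" by blast
  define z where "z = \<tau> u"
  define r where "r = dist z e"
  obtain \<eta> where h: "geodesic_path \<eta> z e" using sp unfolding geodesic_space_def by blast
  have t0: "\<tau> 0 = a" and tL: "\<tau> L = b" using g L_def unfolding geodesic_path_def by auto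
  have ga0: "ga 0 = e" "ga (dist e a) = a" using ga unfolding geodesic_path_def by auto
  have gb0: "gb 0 = e" "gb (dist e b) = b" using gb unfolding geodesic_path_def by auto
  have aA: "a \<in> ga ` {0..dist e a}" "e \<in> ga ` {0..dist e a}"
    using ga0 image_eqI[of a ga "dist e a" "{0..dist e a}"] image_eqI[of e ga 0 "{0..dist e a}"] by auto
  have bB: "b \<in> gb ` {0..dist e b}" "e \<in> gb ` {0..dist e b}"
    using gb0 image_eqI[of b gb "dist e b" "{0..dist e b}"] image_eqI[of e gb 0 "{0..dist e b}"] by auto
  have dza: "dist z a = u" using geo_dist[OF g, of u 0] u t0 L_def z_def by auto
  have dzb: "dist z b = L - u" using geo_dist[OF g, of u L] u tL L_def z_def by auto
  have gple: "gromov_prod e a b \<le> r"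
    using dist_triangle[of e a z] dist_triangle[of e b z] dza dzb L_def u
    unfolding gromov_prod_def r_def by (auto simp: dist_commute)
  have ra: "r \<le> dist e a" using near[rule_format, of 0] u t0 z_def r_def by (auto simp: dist_commute)
  have rb: "r \<le> dist e b" using near[rule_format, of L] u tL z_def r_def L_def by (auto simp: dist_commute)
  have nearA: "\<forall>s\<in>{0..u}. dist e (\<tau> u) \<le> dist e (\<tau> s)" using near u by auto
  have hA: "geodesic_path \<eta> (\<tau> u) e" using h z_def by simp
  define \<tau>' where "\<tau>' = (\<lambda>s. \<tau> (dist a b - s))"
  have g': "geodesic_path \<tau>' b a" unfolding \<tau>'_def by (rule geo_rev[OF g])
  have u': "L - u \<in> {0..dist b a}" using u L_def by (auto simp: dist_commute)
  have tu': "\<tau>' (L - u) = \<tau> u" unfolding \<tau>'_def L_def by simp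
  have nearB: "\<forall>s\<in>{0..L - u}. dist e (\<tau>' (L - u)) \<le> dist e (\<tau>' s)"
    using near u unfolding tu' by (auto simp: \<tau>'_def L_def)
  have hB: "geodesic_path \<eta> (\<tau>' (L - u)) e" using h z_def tu' by simp
  have tr: "t \<le> r" using t gple by simp
  define w where "w = \<eta> (r - t)"
  have etar: "\<eta> r = e" using h r_def unfolding geodesic_path_def by auto
  have we: "dist e w = t" using geo_dist[OF h, of "r - t" r] t tr etar w_def r_def by (auto simp: dist_commute)
  have x: "r - t \<in> {0..dist (\<tau> u) e}" using t tr r_def z_def by auto
  obtain pa where pa: "pa \<in> ga ` {0..dist e a}" "dist w pa \<le> N 3 0"
  proof -
    have uu: "u \<in> {0..dist a b}" using u L_def by simp
    show ?thesis using morse_near[OF g uu nearA hA ma aA x] w_def that by blast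
  qed
  obtain pb where pb: "pb \<in> gb ` {0..dist e b}" "dist w pb \<le> N 3 0"
  proof -
    have x': "r - t \<in> {0..dist (\<tau>' (L - u)) e}" using x tu' by simp
    show ?thesis using morse_near[OF g' u' nearB hB mb bB x'] w_def that by blast
  qed
  have ta: "t \<in> {0..dist e a}" and tb: "t \<in> {0..dist e b}" using t tr ra rb by auto
  have "dist w (ga t) \<le> 2 * N 3 0" using pa close_pt[OF ga ta _ _ we] by auto
  moreover have "dist w (gb t) \<le> 2 * N 3 0" using pb close_pt[OF gb tb _ _ we] by auto
  ultimately show ?thesis using dist_triangle[of "ga t" "gb t" w] by (simp add: dist_commute)
qed


lemma four_point:
  assumes sp: "geodesic_space TYPE('a::metric_space)"
    and a: "(a::'a) \<in> morse_stratum N e" and b: "b \<in> morse_stratum N e" and c: "c \<in> morse_stratum N e"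
  shows "min (gromov_prod e a b) (gromov_prod e b c) - 4 * N 3 0 \<le> gromov_prod e a c"
proof -
  obtain ga where ga: "geodesic_path ga e a" "morse_set N (ga ` {0..dist e a})" using a unfolding morse_stratum_def by blast
  obtain gb where gb: "geodesic_path gb e b" "morse_set N (gb ` {0..dist e b})" using b unfolding morse_stratum_def by blast
  obtain gc where gc: "geodesic_path gc e c" "morse_set N (gc ` {0..dist e c})" using c unfolding morse_stratum_def by blast
  define t where "t = min (gromov_prod e a b) (gromov_prod e b c)"
  have t0: "0 \<le> t" using gp_nonneg[of e a b] gp_nonneg[of e b c] t_def by simp
  have d1: "dist (ga t) (gb t) \<le> 4 * N 3 0" using fellow[OF sp ga gb t0] t_def by simp
  have d2: "dist (gb t) (gc t) \<le> 4 * N 3 0" using fellow[OF sp gb gc t0] t_def by simp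
  have ta: "t \<le> dist e a" using gp_le[of e a b] t_def by simp
  have tc: "t \<le> dist e c" using gp_le[of e c b] gp_comm[of e b c] t_def by simp
  have ga0: "ga (dist e a) = a" using ga unfolding geodesic_path_def by auto
  have gc0: "gc (dist e c) = c" using gc unfolding geodesic_path_def by auto
  have da: "dist a (ga t) = dist e a - t" using geo_dist[OF ga(1), of "dist e a" t] ga0 ta t0 by simp
  have dc: "dist (gc t) c = dist e c - t" using geo_dist[OF gc(1), of t "dist e c"] gc0 tc t0 by simp
  have "dist a c \<le> dist a (ga t) + dist (ga t) (gb t) + dist (gb t) (gc t) + dist (gc t) c"
    using dist_triangle[of a c "ga t"] dist_triangle[of "ga t" c "gb t"] dist_triangle[of "gb t" c "gc t"] by linarith
  hence "dist a c \<le> dist e a + dist e c - 2 * t + 8 * N 3 0" using da dc d1 d2 by linarith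
  hence "t - 4 * N 3 0 \<le> gromov_prod e a c" unfolding gromov_prod_def by simp
  thus ?thesis using t_def by simp
qed

lemma liminf_lemma:
  fixes X Y P P' :: "nat \<Rightarrow> nat \<Rightarrow> real"
  assumes fx: "filterlim (\<lambda>(k,n). X k n) at_top (sequentially \<times>\<^sub>F sequentially)"
    and fy: "filterlim (\<lambda>(l,m). Y l m) at_top (sequentially \<times>\<^sub>F sequentially)"
    and ineq: "\<And>k l n m. min (X k n) (min (P' n m) (Y l m)) - d \<le> P k l"
  shows "Liminf (sequentially \<times>\<^sub>F sequentially) (\<lambda>(n,m). ereal (P' n m))
       \<le> Liminf (sequentially \<times>\<^sub>F sequentially) (\<lambda>(k,l). ereal (P k l)) + ereal d"
proof (rule ccontr)
  let ?F = "sequentially \<times>\<^sub>F sequentially"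
  let ?L' = "Liminf ?F (\<lambda>(n,m). ereal (P' n m))"
  let ?L = "Liminf ?F (\<lambda>(k,l). ereal (P k l))"
  assume "\<not> ?L' \<le> ?L + ereal d"
  hence "?L + ereal d < ?L'" by simp
  then obtain c where c1: "?L + ereal d < ereal c" and c2: "ereal c < ?L'" using ereal_dense2 by blast
  have "eventually (\<lambda>x. ereal c < (\<lambda>(n,m). ereal (P' n m)) x) ?F"
    using c2 order_refl[of ?L'] unfolding le_Liminf_iff by blast
  then obtain K3 where K3: "\<forall>m\<ge>K3. \<forall>n\<ge>K3. c < P' n m" unfolding eventually_prod_sequentially by auto
  have "eventually (\<lambda>x. c \<le> (\<lambda>(k,n). X k n) x) ?F" using fx unfolding filterlim_at_top by blast
  then obtain K1 where K1: "\<forall>n\<ge>K1. \<forall>k\<ge>K1. c \<le> X k n" unfolding eventually_prod_sequentially by auto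
  have "eventually (\<lambda>x. c \<le> (\<lambda>(l,m). Y l m) x) ?F" using fy unfolding filterlim_at_top by blast
  then obtain K2 where K2: "\<forall>m\<ge>K2. \<forall>l\<ge>K2. c \<le> Y l m" unfolding eventually_prod_sequentially by auto
  define K where "K = max K1 (max K2 K3)"
  have ev: "\<forall>l\<ge>K. \<forall>k\<ge>K. c - d \<le> P k l"
  proof (intro allI impI)
    fix k l assume l: "K \<le> l" and k: "K \<le> k"
    have "c \<le> X k K" "c < P' K K" "c \<le> Y l K" using K1 K2 K3 k l K_def by auto
    thus "c - d \<le> P k l" using ineq[of k K K l] by linarith
  qed
  have "ereal (c - d) \<le> ?L" unfolding le_Liminf_iff
  proof (intro allI impI)
    fix y assume y: "y < ereal (c - d)"
    have "eventually (\<lambda>x. ereal (c - d) \<le> (\<lambda>(k,l). ereal (P k l)) x) ?F"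
      unfolding eventually_prod_sequentially using ev by auto
    thus "eventually (\<lambda>x. y < (\<lambda>(k,l). ereal (P k l)) x) ?F"
      by (rule eventually_mono) (use y in auto)
  qed
  hence "ereal c \<le> ?L + ereal d" by (cases ?L) auto
  thus False using c1 by simp
qed




lemma stratum_mono:
  assumes "gauge_le N N'" shows "morse_stratum N e \<subseteq> morse_stratum N' e"
proof -
  have "morse_set N' G" if ms: "morse_set N G" for G :: "'a::metric_space set"
    unfolding morse_set_def
  proof (intro allI impI ballI)
    fix K C q a b t assume h: "1 \<le> K" "0 \<le> C" "quasi_geodesic K C q a b" "q a \<in> G" "q b \<in> G" "t \<in> {a..b}"
    then obtain g where "g \<in> G" "dist (q t) g \<le> N K C" using ms[unfolded morse_set_def, rule_format, OF h] by blast
    moreover have "N K C \<le> N' K C" using assms h unfolding gauge_le_def by auto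
    ultimately show "\<exists>g\<in>G. dist (q t) g \<le> N' K C" by (intro bexI[of _ g]) auto
  qed
  thus ?thesis unfolding morse_stratum_def by auto
qed

lemma class_mono:
  assumes "gauge_le N N'" shows "bdry_class N e x \<subseteq> bdry_class N' e x"
  using stratum_mono[OF assms, of e] unfolding bdry_class_def gromov_seq_def by blast

theorem lemma3p11:
  fixes N N' :: "real \<Rightarrow> real \<Rightarrow> real" and e :: "'a::metric_space"
    and x y :: "nat \<Rightarrow> 'a"
  assumes "geodesic_space TYPE('a)"
    and "morse_gauge N" and "morse_gauge N'" and "gauge_le N N'"
    and "gromov_seq N e x" and "gromov_seq N e y"
  shows "N_gromov_prod e (bdry_class N e x) (bdry_class N e y)
           \<le> N_gromov_prod e (bdry_class N' e x) (bdry_class N' e y)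
       \<and> N_gromov_prod e (bdry_class N' e x) (bdry_class N' e y)
           \<le> N_gromov_prod e (bdry_class N e x) (bdry_class N e y) + ereal (32 * N' 3 0)"
proof
  let ?F = "sequentially \<times>\<^sub>F sequentially"
  let ?f = "\<lambda>(x,y). Liminf ?F (\<lambda>(n,m). ereal (gromov_prod e (x n) (y m)))"
  let ?S = "N_gromov_prod e (bdry_class N e x) (bdry_class N e y)"
  have sub: "bdry_class N e x \<times> bdry_class N e y \<subseteq> bdry_class N' e x \<times> bdry_class N' e y"
    using class_mono[OF assms(4)] by blast
  show "?S \<le> N_gromov_prod e (bdry_class N' e x) (bdry_class N' e y)"
    unfolding N_gromov_prod_def by (rule SUP_subset_mono[OF sub order_refl])
  have M0: "0 \<le> N' 3 0" using assms(3) unfolding morse_gauge_def by auto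
  have xin: "x \<in> bdry_class N e x" using assms(5) unfolding bdry_class_def seq_equiv_def gromov_seq_def by blast
  have yin: "y \<in> bdry_class N e y" using assms(6) unfolding bdry_class_def seq_equiv_def gromov_seq_def by blast
  have fS: "?f (x,y) \<le> ?S" unfolding N_gromov_prod_def by (rule SUP_upper) (use xin yin in auto)
  have SN: "morse_stratum N e \<subseteq> morse_stratum N' e" by (rule stratum_mono[OF assms(4)])
  have xs: "x k \<in> morse_stratum N' e" for k using assms(5) SN unfolding gromov_seq_def by blast
  have ys: "y k \<in> morse_stratum N' e" for k using assms(6) SN unfolding gromov_seq_def by blast
  have "?f p \<le> ?S + ereal (32 * N' 3 0)" if p: "p \<in> bdry_class N' e x \<times> bdry_class N' e y" for p
  proof -
    obtain x' y' where pp: "p = (x', y')" by (cases p)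
    have x': "gromov_seq N' e x'" "seq_equiv e x x'" using p pp unfolding bdry_class_def by auto
    have y': "gromov_seq N' e y'" "seq_equiv e y y'" using p pp unfolding bdry_class_def by auto
    have x's: "x' k \<in> morse_stratum N' e" for k using x'(1) unfolding gromov_seq_def by blast
    have y's: "y' k \<in> morse_stratum N' e" for k using y'(1) unfolding gromov_seq_def by blast
    have ineq: "min (gromov_prod e (x k) (x' n)) (min (gromov_prod e (x' n) (y' m)) (gromov_prod e (y l) (y' m)))
       - 8 * N' 3 0 \<le> gromov_prod e (x k) (y l)" for k l n m
    proof -
      have h1: "min (gromov_prod e (x k) (x' n)) (gromov_prod e (x' n) (y l)) - 4 * N' 3 0 \<le> gromov_prod e (x k) (y l)"
        by (rule four_point[OF assms(1) xs x's ys])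
      have h2: "min (gromov_prod e (x' n) (y' m)) (gromov_prod e (y' m) (y l)) - 4 * N' 3 0 \<le> gromov_prod e (x' n) (y l)"
        by (rule four_point[OF assms(1) x's y's ys])
      have c: "gromov_prod e (y' m) (y l) = gromov_prod e (y l) (y' m)" by (rule gp_comm)
      show ?thesis using h1 h2 M0 unfolding c by (simp add: min_def split: if_splits)
    qed
    have L: "?f (x', y') \<le> ?f (x, y) + ereal (8 * N' 3 0)"
      using liminf_lemma[of "\<lambda>k n. gromov_prod e (x k) (x' n)" "\<lambda>l m. gromov_prod e (y l) (y' m)"
          "\<lambda>n m. gromov_prod e (x' n) (y' m)" "8 * N' 3 0" "\<lambda>k l. gromov_prod e (x k) (y l)"]
        x'(2) y'(2) ineq unfolding seq_equiv_def by simp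
    also have "\<dots> \<le> ?S + ereal (8 * N' 3 0)" using fS by (rule add_right_mono)
    also have "\<dots> \<le> ?S + ereal (32 * N' 3 0)" using M0 by (intro add_left_mono) simp
    finally show ?thesis using pp by simp
  qed
  thus "N_gromov_prod e (bdry_class N' e x) (bdry_class N' e y) \<le> ?S + ereal (32 * N' 3 0)"
    unfolding N_gromov_prod_def by (rule SUP_least)
qed

end
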